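(* Let $G=(V,E)$ be an undirected graph (finite or infinite) and $M=M(S)$ a multiplex of $G$ generated by the simplex $S=(V_S,E_S)$. Then: (i) $G(\widetilde M)$ has a partition $F_M\neq\{\widetilde M\}$ of $\widetilde M$ into maximal ``strong'' partitive sets of $G(\widetilde M)$; (ii) if $\mathrm{rank}(M)=1$, then either $G(\widetilde M)/F_M$ is isomorphic to $S$, or $G(\widetilde M)/F_M$ is indecomposable and isomorphic to a sub-graph $G'=(V',E')$ of $G(\widetilde M)$ with $E'\subseteq M$; (iii) if $\mathrm{rank}(M)\ge 2$, then $G(\widetilde M)/F_M$ is isomorphic to $S$.
   Context: A graph $G=(V,E)$ has vertex set $V$ (possibly infinite) and edge set $E\subseteq V^2$ of ordered pairs; it is undirected if $E$ is irreflexive and symmetric, and then $ab$ denotes $\{(a,b),(b,a)\}$, with $ab\in E$ meaning $(a,b)\in E$. For $X\subseteq V$, $E(X)=\{(a,b)\in E: a,b\in X\}$ and $G(X)=(X,E(X))$. For a set $A$ of ordered pairs, $\widetilde A$ is the set of vertices $a$ such that $(a,b)\in A$ or $(b,a)\in A$ for some $b$. A set $X\subseteq W$ is a partitive set of a graph $H=(W,D)$ if for all $a,b\in X$ and $c\in W\setminus X$: $(a,c)\in D\Leftrightarrow(b,c)\in D$ and $(c,a)\in D\Leftrightarrow(c,b)\in D$; $I(H)$ is the class of partitive sets; a partitive set is trivial if it is a singleton or $W$; $H$ is indecomposable if all its partitive sets are trivial. A ``strong'' partitive set of $H$ is an $X\in I(H)$ such that for every $Y\in I(H)$ with $X\cap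 Y\neq\emptyset$, $X\subseteq Y$ or $Y\subseteq X$; $I_F(H)$ is the class of these. A maximal ``strong'' partitive set of $H$ is an element of $I_F(H)\setminus\{W\}$ maximal for inclusion in $I_F(H)\setminus\{W\}$. For a partition $P$ of $W$ into partitive sets, the quotient $H/P$ is the graph with vertex set $P$ in which distinct $X,Y$ are joined iff $(x,y)\in D$ for some, equivalently every, $x\in X,y\in Y$ (isomorphic to $H(f(P))$ for any choice function $f$ with $f(X)\in X$). Implication classes of undirected $G$: on $E$ define $(a,b)\Gamma(a',b')$ iff either $a=a'$ and $(b,b')\notin E$, or $b=b'$ and $(a,a')\notin E$; the classes of the transitive closure $\Gamma^*$ are the implication classes. For an implication class $A$, $A^{-1}=\{(b,a):(a,b)\in A\}$ and the color class (color) is $\widehat A=A\cup A^{-1}$. A simplex of rank $r\ge1$ is a complete sub-graph $S=(V_S,E_S)$ of $G$ on $r+1$ vertices whose distinct undirected edges lie in distinct color classes. The multiplex generated by $S$ is $M(S)=\bigcup\{\widehat A:\widehat A\text{ a color class},\ \widehat A\cap E_S\neq\emptyset\}$, of rank $r$; $\widetilde M$ is the set of vertices spanned by $M$. *)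

theory Defs
  imports Main "HOL-Library.Disjoint_Sets"
begin

definition undirected :: "'a set \<Rightarrow> ('a \<times> 'a) set \<Rightarrow> bool" where
  "undirected V E \<longleftrightarrow> E \<subseteq> V \<times> V \<and> irrefl E \<and> sym E"

text \<open>E(X): the edges of E with both ends in X (so G(X) = (X, induced_edges E X)).\<close>
definition induced_edges :: "('a \<times> 'a) set \<Rightarrow> 'a set \<Rightarrow> ('a \<times> 'a) set" where
  "induced_edges E X = {(a, b). (a, b) \<in> E \<and> a \<in> X \<and> b \<in> X}"

definition Gamma :: "('a \<times> 'a) set \<Rightarrow> (('a \<times> 'a) \<times> ('a \<times> 'a)) set" where
  "Gamma E = {((a, b), (a', b')). (a, b) \<in> E \<and> (a', b') \<in> E \<and>
      ((a = a' \<and> (b, b') \<notin> E) \<or> (b = b' \<and> (a, a') \<notin> E))}"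

definition implication_classes :: "('a \<times> 'a) set \<Rightarrow> ('a \<times> 'a) set set" where
  "implication_classes E = E // ((Gamma E)\<^sup>+)"

definition color_classes :: "('a \<times> 'a) set \<Rightarrow> ('a \<times> 'a) set set" where
  "color_classes E = {A \<union> A\<inverse> | A. A \<in> implication_classes E}"

text \<open>A simplex, given by its vertex set VS (its edge set is induced_edges E VS);
  its rank is card VS - 1.\<close>
definition simplex :: "'a set \<Rightarrow> ('a \<times> 'a) set \<Rightarrow> 'a set \<Rightarrow> bool" where
  "simplex V E VS \<longleftrightarrow> VS \<subseteq> V \<and> finite VS \<and> card VS \<ge> 2 \<and>
     (\<forall>a\<in>VS. \<forall>b\<in>VS. a \<noteq> b \<longrightarrow> (a, b) \<in> E) \<and>
     (\<forall>a\<in>VS. \<forall>b\<in>VS. \<forall>c\<in>VS. \<forall>d\<in>VS.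
        a \<noteq> b \<longrightarrow> c \<noteq> d \<longrightarrow> {a, b} \<noteq> {c, d} \<longrightarrow>
        (\<forall>C\<in>color_classes E. (a, b) \<in> C \<longrightarrow> (c, d) \<notin> C))"

definition simplex_rank :: "'a set \<Rightarrow> nat" where
  "simplex_rank VS = card VS - 1"

definition multiplex :: "('a \<times> 'a) set \<Rightarrow> 'a set \<Rightarrow> ('a \<times> 'a) set" where
  "multiplex E VS = \<Union>{C \<in> color_classes E. C \<inter> induced_edges E VS \<noteq> {}}"

definition partitive :: "'b set \<Rightarrow> ('b \<times> 'b) set \<Rightarrow> 'b set \<Rightarrow> bool" where
  "partitive W D X \<longleftrightarrow> X \<subseteq> W \<and>
     (\<forall>a\<in>X. \<forall>b\<in>X. \<forall>c\<in>W - X.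
        ((a, c) \<in> D \<longleftrightarrow> (b, c) \<in> D) \<and> ((c, a) \<in> D \<longleftrightarrow> (c, b) \<in> D))"

definition strong_partitive :: "'b set \<Rightarrow> ('b \<times> 'b) set \<Rightarrow> 'b set \<Rightarrow> bool" where
  "strong_partitive W D X \<longleftrightarrow> partitive W D X \<and>
     (\<forall>Y. partitive W D Y \<and> X \<inter> Y \<noteq> {} \<longrightarrow> X \<subseteq> Y \<or> Y \<subseteq> X)"

definition max_strong_partitive :: "'b set \<Rightarrow> ('b \<times> 'b) set \<Rightarrow> 'b set \<Rightarrow> bool" where
  "max_strong_partitive W D X \<longleftrightarrow> strong_partitive W D X \<and> X \<noteq> W \<and>
     (\<forall>Y. strong_partitive W D Y \<and> Y \<noteq> W \<and> X \<subseteq> Y \<longrightarrow> Y = X)"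

definition indecomposable :: "'b set \<Rightarrow> ('b \<times> 'b) set \<Rightarrow> bool" where
  "indecomposable W D \<longleftrightarrow>
     (\<forall>X. partitive W D X \<longrightarrow> X = {} \<or> (\<exists>x. X = {x}) \<or> X = W)"

definition quotient_edges :: "('b \<times> 'b) set \<Rightarrow> 'b set set \<Rightarrow> ('b set \<times> 'b set) set" where
  "quotient_edges D P = {(X, Y). X \<in> P \<and> Y \<in> P \<and> X \<noteq> Y \<and> (\<exists>x\<in>X. \<exists>y\<in>Y. (x, y) \<in> D)}"

definition graph_iso :: "'b set \<Rightarrow> ('b \<times> 'b) set \<Rightarrow> 'c set \<Rightarrow> ('c \<times> 'c) set \<Rightarrow> bool" where
  "graph_iso V1 E1 V2 E2 \<longleftrightarrow> (\<exists>f. bij_betw f V1 V2 \<and>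
     (\<forall>a\<in>V1. \<forall>b\<in>V1. (a, b) \<in> E1 \<longleftrightarrow> (f a, f b) \<in> E2))"

end

theory Submission
  imports Defs
begin

locale ug =
  fixes E :: "('a \<times> 'a) set"
  assumes symE: "sym E" and irrE: "irrefl E"
begin

abbreviation G where "G \<equiv> Gamma E"

lemma E_sym: "(x,y) \<in> E \<Longrightarrow> (y,x) \<in> E"
  using symE by (auto simp: sym_def)

lemma E_irr: "(x,x) \<notin> E"
  using irrE by (auto simp: irrefl_def)

lemma E_neq: "(x,y) \<in> E \<Longrightarrow> x \<noteq> y"
  using E_irr by auto

lemma G_E: "(e1,e2) \<in> G \<Longrightarrow> e1 \<in> E \<and> e2 \<in> E"
  by (auto simp: Gamma_def)

lemma G_refl: "e \<in> E \<Longrightarrow> (e,e) \<in> G"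
  using E_irr by (cases e) (auto simp: Gamma_def)

lemma G_sym: "(e1,e2) \<in> G \<Longrightarrow> (e2,e1) \<in> G"
  by (auto simp: Gamma_def dest: E_sym)

lemma G_swap: "(e1,e2) \<in> G \<Longrightarrow> (prod.swap e1, prod.swap e2) \<in> G"
  by (auto simp: Gamma_def dest: E_sym)

lemma T_E: "(e1,e2) \<in> G\<^sup>+ \<Longrightarrow> e1 \<in> E \<and> e2 \<in> E"
  by (induction rule: trancl_induct) (auto dest: G_E)

lemma T_refl: "e \<in> E \<Longrightarrow> (e,e) \<in> G\<^sup>+"
  using G_refl by blast

lemma T_sym: "(e1,e2) \<in> G\<^sup>+ \<Longrightarrow> (e2,e1) \<in> G\<^sup>+"
proof (induction rule: trancl_induct)
  case (base y) then show ?case using G_sym by blast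
next
  case (step y z) then show ?case
    by (meson G_sym trancl_into_trancl2)
qed

lemma T_trans: "(e1,e2) \<in> G\<^sup>+ \<Longrightarrow> (e2,e3) \<in> G\<^sup>+ \<Longrightarrow> (e1,e3) \<in> G\<^sup>+"
  by (rule trancl_trans)

lemma T_swap: "(e1,e2) \<in> G\<^sup>+ \<Longrightarrow> (prod.swap e1, prod.swap e2) \<in> G\<^sup>+"
proof (induction rule: trancl_induct)
  case (base y) then show ?case using G_swap by blast
next
  case (step y z) then show ?case
    by (meson G_swap trancl_into_trancl)
qed

lemma T_swap': "((a,b),(c,d)) \<in> G\<^sup>+ \<Longrightarrow> ((b,a),(d,c)) \<in> G\<^sup>+"
  using T_swap by fastforce

lemma G_step1: "(a,b) \<in> E \<Longrightarrow> (a,b') \<in> E \<Longrightarrow> (b,b') \<notin> E \<Longrightarrow> ((a,b),(a,b')) \<in> G"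
  by (auto simp: Gamma_def)

lemma G_step2: "(a,b) \<in> E \<Longrightarrow> (a',b) \<in> E \<Longrightarrow> (a,a') \<notin> E \<Longrightarrow> ((a,b),(a',b)) \<in> G"
  by (auto simp: Gamma_def)

lemma chain_induct[consumes 1, case_names base step1 step2]:
  assumes "(e1,e2) \<in> G\<^sup>+" "P e1"
    and s1: "\<And>a b b'. (e1,(a,b)) \<in> G\<^sup>+ \<Longrightarrow> (a,b) \<in> E \<Longrightarrow> (a,b') \<in> E \<Longrightarrow> (b,b') \<notin> E
              \<Longrightarrow> P (a,b) \<Longrightarrow> P (a,b')"
    and s2: "\<And>a a' b. (e1,(a,b)) \<in> G\<^sup>+ \<Longrightarrow> (a,b) \<in> E \<Longrightarrow> (a',b) \<in> E \<Longrightarrow> (a,a') \<notin> E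
              \<Longrightarrow> P (a,b) \<Longrightarrow> P (a',b)"
  shows "P e2"
proof -
  have "e1 \<in> E" using assms(1) T_E by blast
  have "(e1,e) \<in> G\<^sup>* \<Longrightarrow> P e" for e
  proof (induction rule: rtrancl_induct)
    case base then show ?case using assms(2) .
  next
    case (step y z)
    have y1: "(e1,y) \<in> G\<^sup>+"
      using step.hyps(1) \<open>e1 \<in> E\<close> T_refl by (metis rtrancl_eq_or_trancl)
    obtain a b where y: "y = (a,b)" by (cases y)
    from step.hyps(2) y show ?case
      unfolding Gamma_def using s1 s2 y1 step.IH by auto
  qed
  from this[OF trancl_into_rtrancl[OF assms(1)]] show ?thesis .
qed

definition cls :: "('a \<times> 'a) \<Rightarrow> ('a \<times> 'a) set" where
  "cls e = G\<^sup>+ `` {e}"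

lemma color_classes_eq: "color_classes E = {cls e \<union> (cls e)\<inverse> | e. e \<in> E}"
  unfolding color_classes_def implication_classes_def quotient_def cls_def by auto

lemma swap_swap_T: "(prod.swap x, prod.swap y) \<in> G\<^sup>+ \<Longrightarrow> (x, y) \<in> G\<^sup>+"
  using T_swap[of "prod.swap x" "prod.swap y"] by simp

lemma in_conv_swap: "y \<in> R\<inverse> \<longleftrightarrow> prod.swap y \<in> R"
  by (cases y) auto

lemma in_cc: "C \<in> color_classes E \<Longrightarrow> x \<in> C \<Longrightarrow> y \<in> C \<Longrightarrow>
   (x,y) \<in> G\<^sup>+ \<or> (x, prod.swap y) \<in> G\<^sup>+"
proof -
  assume "C \<in> color_classes E" "x \<in> C" "y \<in> C"
  then obtain e where C: "C = cls e \<union> (cls e)\<inverse>" unfolding color_classes_eq by auto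
  have x: "(e,x) \<in> G\<^sup>+ \<or> (e, prod.swap x) \<in> G\<^sup>+"
    using \<open>x \<in> C\<close> unfolding C cls_def in_conv_swap by auto
  have y: "(e,y) \<in> G\<^sup>+ \<or> (e, prod.swap y) \<in> G\<^sup>+"
    using \<open>y \<in> C\<close> unfolding C cls_def Un_iff in_conv_swap by auto
  from x y show ?thesis
  proof (elim disjE)
    assume "(e,x) \<in> G\<^sup>+" "(e,y) \<in> G\<^sup>+" then show ?thesis using T_sym T_trans by blast
  next
    assume "(e,x) \<in> G\<^sup>+" "(e,prod.swap y) \<in> G\<^sup>+" then show ?thesis using T_sym T_trans by blast
  next
    assume "(e,prod.swap x) \<in> G\<^sup>+" "(e,y) \<in> G\<^sup>+"
    then have "(prod.swap x, y) \<in> G\<^sup>+" using T_sym T_trans by blast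
    then have "(x, prod.swap y) \<in> G\<^sup>+" using T_swap by fastforce
    then show ?thesis by blast
  next
    assume "(e,prod.swap x) \<in> G\<^sup>+" "(e,prod.swap y) \<in> G\<^sup>+"
    then have "(prod.swap x, prod.swap y) \<in> G\<^sup>+" using T_sym T_trans by blast
    then show ?thesis using swap_swap_T by blast
  qed
qed

lemma samecol_cc: "(x,y) \<in> G\<^sup>+ \<or> (x, prod.swap y) \<in> G\<^sup>+ \<Longrightarrow>
   \<exists>C\<in>color_classes E. x \<in> C \<and> y \<in> C"
proof -
  assume a: "(x,y) \<in> G\<^sup>+ \<or> (x, prod.swap y) \<in> G\<^sup>+"
  then have xE: "x \<in> E" using T_E by blast
  let ?C = "cls x \<union> (cls x)\<inverse>"
  have c1: "?C \<in> color_classes E" unfolding color_classes_eq using xE by blast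
  have c2: "x \<in> ?C" using T_refl[OF xE] unfolding cls_def by auto
  have c3: "y \<in> ?C" using a unfolding cls_def Un_iff in_conv_swap by auto
  show ?thesis
  proof (rule bexI)
    show "x \<in> ?C \<and> y \<in> ?C" using c2 c3 by (intro conjI)
  qed (rule c1)
qed

lemma multiplex_eq: "multiplex E VS = G\<^sup>+ `` induced_edges E VS"
proof
  show "multiplex E VS \<subseteq> G\<^sup>+ `` induced_edges E VS"
  proof
    fix e assume "e \<in> multiplex E VS"
    then obtain C s where C: "C \<in> color_classes E" "s \<in> C" "s \<in> induced_edges E VS" "e \<in> C"
      unfolding multiplex_def by auto
    from in_cc[OF C(1) C(2) C(4)] show "e \<in> G\<^sup>+ `` induced_edges E VS"
    proof
      assume "(s,e) \<in> G\<^sup>+" then show ?thesis using C(3) by auto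
    next
      assume "(s, prod.swap e) \<in> G\<^sup>+"
      then have "(prod.swap s, e) \<in> G\<^sup>+" using T_swap by fastforce
      moreover have "prod.swap s \<in> induced_edges E VS"
        using C(3) by (cases s) (auto simp: induced_edges_def dest: E_sym)
      ultimately show ?thesis by auto
    qed
  qed
next
  show "G\<^sup>+ `` induced_edges E VS \<subseteq> multiplex E VS"
  proof
    fix e assume "e \<in> G\<^sup>+ `` induced_edges E VS"
    then obtain s where s: "s \<in> induced_edges E VS" "(s,e) \<in> G\<^sup>+" by auto
    then obtain C where "C\<in>color_classes E" "s \<in> C" "e \<in> C" using samecol_cc by blast
    then show "e \<in> multiplex E VS" using s(1) unfolding multiplex_def by auto
  qed
qed

end



lemma partD: "partitive W D Y \<Longrightarrow> a \<in> Y \<Longrightarrow> b \<in> Y \<Longrightarrow> c \<in> W \<Longrightarrow> c \<notin> Y \<Longrightarrow>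
   ((a,c) \<in> D \<longleftrightarrow> (b,c) \<in> D) \<and> ((c,a) \<in> D \<longleftrightarrow> (c,b) \<in> D)"
  unfolding partitive_def by blast

lemma part_sub: "partitive W D Y \<Longrightarrow> Y \<subseteq> W"
  unfolding partitive_def by blast

lemma partI:
  assumes "Y \<subseteq> W"
    and "\<And>a b c. a \<in> Y \<Longrightarrow> b \<in> Y \<Longrightarrow> c \<in> W \<Longrightarrow> c \<notin> Y \<Longrightarrow>
          ((a,c) \<in> D \<longleftrightarrow> (b,c) \<in> D) \<and> ((c,a) \<in> D \<longleftrightarrow> (c,b) \<in> D)"
  shows "partitive W D Y"
  unfolding partitive_def using assms by blast

lemma part_single: "x \<in> W \<Longrightarrow> partitive W D {x}"
  unfolding partitive_def by blast

lemma part_Union: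
  assumes "\<And>Y. Y \<in> YY \<Longrightarrow> partitive W D Y \<and> x \<in> Y"
  shows "partitive W D (\<Union>YY)"
proof (rule partI)
  show "\<Union>YY \<subseteq> W" using assms part_sub by blast
next
  fix p q c assume p: "p \<in> \<Union>YY" and q: "q \<in> \<Union>YY" and c: "c \<in> W" "c \<notin> \<Union>YY"
  from p obtain Y1 where Y1: "Y1 \<in> YY" "p \<in> Y1" by auto
  from q obtain Y2 where Y2: "Y2 \<in> YY" "q \<in> Y2" by auto
  have 1: "((p,c) \<in> D \<longleftrightarrow> (x,c) \<in> D) \<and> ((c,p) \<in> D \<longleftrightarrow> (c,x) \<in> D)"
    using partD[of W D Y1 p x c] assms Y1 c by auto
  have 2: "((q,c) \<in> D \<longleftrightarrow> (x,c) \<in> D) \<and> ((c,q) \<in> D \<longleftrightarrow> (c,x) \<in> D)"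
    using partD[of W D Y2 q x c] assms Y2 c by auto
  show "((p, c) \<in> D) = ((q, c) \<in> D) \<and> ((c, p) \<in> D) = ((c, q) \<in> D)" using 1 2 by blast
qed

lemma part_Un: "partitive W D X \<Longrightarrow> partitive W D Y \<Longrightarrow> x \<in> X \<Longrightarrow> x \<in> Y \<Longrightarrow> partitive W D (X \<union> Y)"
  using part_Union[of "{X,Y}" W D x] by auto

lemma QE_iff:
  assumes P: "partition_on W F" and mods: "\<And>X. X \<in> F \<Longrightarrow> partitive W D X"
    and X: "X \<in> F" and Y: "Y \<in> F" and x: "x \<in> X" and y: "y \<in> Y"
  shows "(X,Y) \<in> quotient_edges D F \<longleftrightarrow> X \<noteq> Y \<and> (x,y) \<in> D"
proof
  assume "(X,Y) \<in> quotient_edges D F"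
  then obtain x' y' where q: "X \<noteq> Y" "x' \<in> X" "y' \<in> Y" "(x',y') \<in> D"
    unfolding quotient_edges_def by auto
  have disj: "X \<inter> Y = {}" using P X Y q(1) unfolding partition_on_def disjoint_def by blast
  have WX: "X \<subseteq> W" "Y \<subseteq> W" using part_sub[OF mods[OF X]] part_sub[OF mods[OF Y]] by auto
  have "(x,y') \<in> D" using partD[OF mods[OF X] q(2) x, of y'] q disj WX by auto
  moreover have "x \<notin> Y" using x disj by auto
  ultimately have "(x,y) \<in> D" using partD[OF mods[OF Y] q(3) y, of x] x WX by auto
  then show "X \<noteq> Y \<and> (x,y) \<in> D" using q(1) by auto
next
  assume "X \<noteq> Y \<and> (x,y) \<in> D"
  then show "(X,Y) \<in> quotient_edges D F" unfolding quotient_edges_def using X Y x y by auto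
qed

lemma quot_union_part:
  assumes P: "partition_on W F" and mods: "\<And>X. X \<in> F \<Longrightarrow> partitive W D X"
    and XX: "partitive F (quotient_edges D F) XX"
  shows "partitive W D (\<Union>XX)"
proof (rule partI)
  have "XX \<subseteq> F" using XX part_sub by blast
  then show "\<Union>XX \<subseteq> W" using P unfolding partition_on_def by auto
next
  have XF: "XX \<subseteq> F" using XX part_sub by blast
  fix p q c assume p: "p \<in> \<Union>XX" and q: "q \<in> \<Union>XX" and c: "c \<in> W" "c \<notin> \<Union>XX"
  from p obtain X1 where X1: "X1 \<in> XX" "p \<in> X1" by auto
  from q obtain X2 where X2: "X2 \<in> XX" "q \<in> X2" by auto
  from c P obtain Z where Z: "Z \<in> F" "c \<in> Z" unfolding partition_on_def by auto
  have ZX: "Z \<notin> XX" using Z c by auto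
  have "X1 \<in> F" "X2 \<in> F" using X1 X2 XF by auto
  have e1: "(p,c) \<in> D \<longleftrightarrow> (X1,Z) \<in> quotient_edges D F"
    using QE_iff[OF P mods \<open>X1 \<in> F\<close> Z(1) X1(2) Z(2)] X1 ZX by auto
  have e2: "(q,c) \<in> D \<longleftrightarrow> (X2,Z) \<in> quotient_edges D F"
    using QE_iff[OF P mods \<open>X2 \<in> F\<close> Z(1) X2(2) Z(2)] X2 ZX by auto
  have e1': "(c,p) \<in> D \<longleftrightarrow> (Z,X1) \<in> quotient_edges D F"
    using QE_iff[OF P mods Z(1) \<open>X1 \<in> F\<close> Z(2) X1(2)] X1 ZX by auto
  have e2': "(c,q) \<in> D \<longleftrightarrow> (Z,X2) \<in> quotient_edges D F"
    using QE_iff[OF P mods Z(1) \<open>X2 \<in> F\<close> Z(2) X2(2)] X2 ZX by auto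
  have "((X1,Z) \<in> quotient_edges D F \<longleftrightarrow> (X2,Z) \<in> quotient_edges D F) \<and>
        ((Z,X1) \<in> quotient_edges D F \<longleftrightarrow> (Z,X2) \<in> quotient_edges D F)"
    using partD[OF XX X1(1) X2(1) Z(1) ZX] .
  then show "((p, c) \<in> D) = ((q, c) \<in> D) \<and> ((c, p) \<in> D) = ((c, q) \<in> D)"
    using e1 e2 e1' e2' by blast
qed

lemma graph_iso_inv:
  assumes "bij_betw h A B" "\<And>x y. x \<in> A \<Longrightarrow> y \<in> A \<Longrightarrow> (x,y) \<in> E1 \<longleftrightarrow> (h x, h y) \<in> E2"
  shows "graph_iso B E2 A E1"
  unfolding graph_iso_def
proof (intro exI conjI ballI)
  show "bij_betw (inv_into A h) B A" using assms(1) by (rule bij_betw_inv_into)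
  fix X Y assume X: "X \<in> B" and Y: "Y \<in> B"
  have "inv_into A h X \<in> A" "inv_into A h Y \<in> A" "h (inv_into A h X) = X" "h (inv_into A h Y) = Y"
    using X Y assms(1) by (auto simp: bij_betw_def inv_into_into f_inv_into_f)
  then show "((X, Y) \<in> E2) = ((inv_into A h X, inv_into A h Y) \<in> E1)"
    using assms(2) by metis
qed


locale mp = ug E for E :: "('a \<times> 'a) set" +
  fixes VS :: "'a set"
begin

definition "M = G\<^sup>+ `` induced_edges E VS"
definition "Mt = Field M"
definition "D = induced_edges E Mt"

lemma M_E: "e \<in> M \<Longrightarrow> e \<in> E"
  unfolding M_def using T_E by blast

lemma M_step: "e \<in> M \<Longrightarrow> (e,e') \<in> G\<^sup>+ \<Longrightarrow> e' \<in> M"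
  unfolding M_def by (meson Image_iff trancl_trans)

lemma M_swap: "(x,y) \<in> M \<Longrightarrow> (y,x) \<in> M"
proof -
  assume "(x,y) \<in> M"
  then obtain s where s: "s \<in> induced_edges E VS" "(s,(x,y)) \<in> G\<^sup>+" unfolding M_def by auto
  have "(prod.swap s, (y,x)) \<in> G\<^sup>+" using T_swap[OF s(2)] by simp
  moreover have "prod.swap s \<in> induced_edges E VS"
    using s(1) by (cases s) (auto simp: induced_edges_def dest: E_sym)
  ultimately show ?thesis unfolding M_def by auto
qed

lemma Mt_iff: "x \<in> Mt \<longleftrightarrow> (\<exists>y. (x,y) \<in> M)"
  unfolding Mt_def Field_def using M_swap by blast

lemma M_Mt: "(x,y) \<in> M \<Longrightarrow> x \<in> Mt \<and> y \<in> Mt"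
  using Mt_iff M_swap by blast

lemma D_iff: "x \<in> Mt \<Longrightarrow> y \<in> Mt \<Longrightarrow> (x,y) \<in> D \<longleftrightarrow> (x,y) \<in> E"
  unfolding D_def induced_edges_def by auto

lemma D_E: "(x,y) \<in> D \<Longrightarrow> (x,y) \<in> E \<and> x \<in> Mt \<and> y \<in> Mt"
  unfolding D_def induced_edges_def by auto

lemma F1:
  assumes Y: "partitive Mt D Y" and xy: "(x,y) \<in> M" "x \<in> Y" "y \<in> Y"
    and ch: "((x,y),(u,v)) \<in> G\<^sup>+"
  shows "u \<in> Y \<and> v \<in> Y"
proof -
  have YM: "Y \<subseteq> Mt" using part_sub[OF Y] .
  have "(\<lambda>e. fst e \<in> Y \<and> snd e \<in> Y) (u,v)"
    using ch
  proof (induction rule: chain_induct)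
    case base then show ?case using xy by simp
  next
    case (step1 a b b')
    have "((x,y),(a,b')) \<in> G\<^sup>+" using step1 G_step1 trancl_into_trancl by metis
    then have "(a,b') \<in> M" using M_step xy(1) by blast
    then have b'M: "b' \<in> Mt" using M_Mt by blast
    show ?case
    proof (rule ccontr)
      assume "\<not> ?case"
      then have "b' \<notin> Y" using step1 by auto
      then have "(a,b') \<in> D \<longleftrightarrow> (b,b') \<in> D" using partD[OF Y, of a b b'] step1 b'M by auto
      moreover have "(a,b') \<in> D" using D_iff step1 YM b'M by auto
      ultimately show False using D_E step1 by blast
    qed
  next
    case (step2 a a' b)
    have "((x,y),(a',b)) \<in> G\<^sup>+" using step2 G_step2 trancl_into_trancl by metis
    then have "(a',b) \<in> M" using M_step xy(1) by blast
    then have a'M: "a' \<in> Mt" using M_Mt by blast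
    show ?case
    proof (rule ccontr)
      assume "\<not> ?case"
      then have "a' \<notin> Y" using step2 by auto
      then have "(a',b) \<in> D \<longleftrightarrow> (a',a) \<in> D" using partD[OF Y, of b a a'] step2 a'M by auto
      moreover have "(a',b) \<in> D" using D_iff step2 YM a'M by auto
      ultimately show False using D_E step2 E_sym by blast
    qed
  qed
  then show ?thesis by simp
qed

end

locale r1 = mp E VS for E :: "('a \<times> 'a) set" and VS +
  fixes a b :: 'a
  assumes VSab: "VS = {a,b}" and abE: "(a,b) \<in> E"
begin

lemma a_neq_b: "a \<noteq> b" using E_neq abE .

lemma IE_ab: "induced_edges E VS = {(a,b),(b,a)}"
  unfolding VSab induced_edges_def using abE E_sym E_irr by auto

lemma M_iff1: "e \<in> M \<longleftrightarrow> ((a,b),e) \<in> G\<^sup>+ \<or> ((b,a),e) \<in> G\<^sup>+"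
  unfolding M_def IE_ab by auto

lemma ab_M: "(a,b) \<in> M"
  using M_iff1 T_refl abE by blast

lemma a_Mt: "a \<in> Mt" and b_Mt: "b \<in> Mt"
  using M_Mt ab_M by auto

lemma M_single:
  assumes "e \<in> M" "e' \<in> M"
  shows "(e,e') \<in> G\<^sup>+ \<or> (e, prod.swap e') \<in> G\<^sup>+"
proof -
  have s: "((b,a), e') \<in> G\<^sup>+ \<Longrightarrow> ((a,b), prod.swap e') \<in> G\<^sup>+"
    using T_swap[of "(b,a)" e'] by simp
  have s2: "((b,a), e) \<in> G\<^sup>+ \<Longrightarrow> ((a,b), prod.swap e) \<in> G\<^sup>+"
    using T_swap[of "(b,a)" e] by simp
  from assms[unfolded M_iff1] show ?thesis
  proof (elim disjE)
    assume "((a,b),e) \<in> G\<^sup>+" "((a,b),e') \<in> G\<^sup>+" then show ?thesis using T_sym T_trans by blast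
  next
    assume "((a,b),e) \<in> G\<^sup>+" "((b,a),e') \<in> G\<^sup>+" then show ?thesis using s T_sym T_trans by blast
  next
    assume "((b,a),e) \<in> G\<^sup>+" "((a,b),e') \<in> G\<^sup>+"
    then have "(prod.swap e, e') \<in> G\<^sup>+" using s2 T_sym T_trans by blast
    then have "(e, prod.swap e') \<in> G\<^sup>+" using T_swap[of "prod.swap e" e'] by simp
    then show ?thesis by blast
  next
    assume "((b,a),e) \<in> G\<^sup>+" "((b,a),e') \<in> G\<^sup>+" then show ?thesis using T_sym T_trans by blast
  qed
qed

lemma F1':
  assumes Y: "partitive Mt D Y" and xy: "(x,y) \<in> M" "x \<in> Y" "y \<in> Y"
  shows "Y = Mt"
proof
  show "Y \<subseteq> Mt" using part_sub[OF Y] .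
  show "Mt \<subseteq> Y"
  proof
    fix z assume "z \<in> Mt"
    then obtain w where zw: "(z,w) \<in> M" using Mt_iff by blast
    from M_single[OF xy(1) zw] show "z \<in> Y"
    proof
      assume "((x,y),(z,w)) \<in> G\<^sup>+" then show ?thesis using F1[OF Y xy] by blast
    next
      assume "((x,y),prod.swap (z,w)) \<in> G\<^sup>+" then show ?thesis using F1[OF Y xy, of w z] by simp
    qed
  qed
qed

lemma apex:
  assumes xz: "(x,z) \<in> M" and xc: "(x,c) \<in> E" "(x,c) \<notin> M" and zc: "(z,c) \<in> E" "(z,c) \<notin> M"
  shows "c \<notin> Mt"
proof
  assume cM: "c \<in> Mt"
  define P where "P = (\<lambda>e. (fst e, c) \<in> E \<and> (fst e, c) \<notin> M \<and> (snd e, c) \<in> E \<and> (snd e, c) \<notin> M)"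
  have inv: "P e'" if "((x,z),e') \<in> G\<^sup>+" for e'
    using that
  proof (induction rule: chain_induct)
    case base then show ?case unfolding P_def using xc zc by simp
  next
    case (step1 u v v')
    have uvM: "(u,v) \<in> M" using M_step[OF xz step1(1)] .
    have uv'M: "(u,v') \<in> M" using M_step[OF uvM] G_step1[OF step1(2,3,4)] by blast
    have 1: "(v',c) \<in> E"
    proof (rule ccontr)
      assume "(v',c) \<notin> E"
      then have "((u,v'),(u,c)) \<in> G" using G_step1 step1 P_def by simp
      then have "(u,c) \<in> M" using M_step[OF uv'M] by blast
      then show False using step1(5) P_def by simp
    qed
    have 2: "(v',c) \<notin> M"
    proof
      assume "(v',c) \<in> M"
      moreover have "((v',c),(v,c)) \<in> G" using G_step2[of v' c v] 1 step1 P_def E_sym by auto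
      ultimately have "(v,c) \<in> M" using M_step by blast
      then show False using step1(5) P_def by simp
    qed
    show ?case using 1 2 step1(5) P_def by simp
  next
    case (step2 u u' v)
    have uvM: "(u,v) \<in> M" using M_step[OF xz step2(1)] .
    have u'vM: "(u',v) \<in> M" using M_step[OF uvM] G_step2[OF step2(2,3,4)] by blast
    have 1: "(u',c) \<in> E"
    proof (rule ccontr)
      assume "(u',c) \<notin> E"
      then have "((v,u'),(v,c)) \<in> G" using G_step1 step2 P_def E_sym by simp
      then have "(v,c) \<in> M" using M_step M_swap[OF u'vM] by blast
      then show False using step2(5) P_def by simp
    qed
    have 2: "(u',c) \<notin> M"
    proof
      assume "(u',c) \<in> M"
      moreover have "((u',c),(u,c)) \<in> G" using G_step2[of u' c u] 1 step2 P_def E_sym by auto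
      ultimately have "(u,c) \<in> M" using M_step by blast
      then show False using step2(5) P_def by simp
    qed
    show ?case using 1 2 step2(5) P_def by simp
  qed
  obtain w where cw: "(c,w) \<in> M" using cM Mt_iff by blast
  from M_single[OF xz cw] show False
  proof
    assume "((x,z),(c,w)) \<in> G\<^sup>+" then show False using inv P_def E_irr by fastforce
  next
    assume "((x,z),prod.swap (c,w)) \<in> G\<^sup>+" then show False using inv P_def E_irr by fastforce
  qed
qed

definition "K = {(u,v). u \<in> Mt \<and> v \<in> Mt \<and> (u,v) \<in> E \<and> (u,v) \<notin> M}"

lemma K_sym: "(u,v) \<in> K \<Longrightarrow> (v,u) \<in> K"
  unfolding K_def using E_sym M_swap by blast

lemma KP: "(x,w) \<in> K\<^sup>* \<Longrightarrow> (x,z) \<in> M \<Longrightarrow> (w,z) \<in> M"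
proof (induction rule: rtrancl_induct)
  case base then show ?case .
next
  case (step w w')
  have wz: "(w,z) \<in> M" using step by blast
  have ww': "(w,w') \<in> E" "(w,w') \<notin> M" "w' \<in> Mt" using step(2) unfolding K_def by auto
  have 1: "(w',z) \<in> E"
  proof (rule ccontr)
    assume "(w',z) \<notin> E"
    then have "((w,z),(w,w')) \<in> G" using G_step1[of w z w'] M_E[OF wz] ww' E_sym by auto
    then show False using M_step[OF wz] ww' by blast
  qed
  show ?case
  proof (rule ccontr)
    assume "(w',z) \<notin> M"
    then have "(z,w') \<notin> M" using M_swap by blast
    then have "w' \<notin> Mt" using apex[OF wz ww'(1,2)] 1 E_sym by blast
    then show False using ww'(3) by blast
  qed
qed

lemma K_Mt: "(x,y) \<in> K\<^sup>* \<Longrightarrow> x \<in> Mt \<Longrightarrow> y \<in> Mt"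
  by (induction rule: rtrancl_induct) (auto simp: K_def)

lemma KC_ne: "x \<in> Mt \<Longrightarrow> K\<^sup>* `` {x} \<noteq> Mt"
proof
  assume x: "x \<in> Mt" and eq: "K\<^sup>* `` {x} = Mt"
  obtain z where xz: "(x,z) \<in> M" using x Mt_iff by blast
  then have "z \<in> Mt" using M_Mt by blast
  then have "(x,z) \<in> K\<^sup>*" using eq by auto
  then have "(z,z) \<in> M" using KP xz by blast
  then show False using M_E E_irr by blast
qed

lemma KM: assumes x: "x \<in> Mt" shows "partitive Mt D (K\<^sup>* `` {x})"
proof (rule partI)
  show "K\<^sup>* `` {x} \<subseteq> Mt" using K_Mt x by blast
  have main: "(y,z) \<in> E \<longleftrightarrow> (x,z) \<in> E" if y: "(x,y) \<in> K\<^sup>*" and z: "z \<in> Mt" "z \<notin> K\<^sup>* `` {x}" for y z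
    using y
  proof (induction rule: rtrancl_induct)
    case base then show ?case by simp
  next
    case (step w w')
    have ww': "(w,w') \<in> E" "(w,w') \<notin> M" "w \<in> Mt" "w' \<in> Mt" using step(2) unfolding K_def by auto
    have xw: "(x,w) \<in> K\<^sup>*" "(x,w') \<in> K\<^sup>*" using step by auto
    have nK1: "(w,z) \<notin> K" using xw z by (meson Image_singleton_iff rtrancl.rtrancl_into_rtrancl)
    have nK2: "(w',z) \<notin> K" using xw z by (meson Image_singleton_iff rtrancl.rtrancl_into_rtrancl)
    have "(w,z) \<in> E \<longleftrightarrow> (w',z) \<in> E"
    proof
      assume wz: "(w,z) \<in> E"
      then have wzM: "(w,z) \<in> M" using nK1 ww' z unfolding K_def by auto
      show "(w',z) \<in> E"
      proof (rule ccontr)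
        assume "(w',z) \<notin> E"
        then have "((w,z),(w,w')) \<in> G" using G_step1[of w z w'] wz ww' E_sym by auto
        then show False using M_step[OF wzM] ww' by blast
      qed
    next
      assume wz: "(w',z) \<in> E"
      then have wzM: "(w',z) \<in> M" using nK2 ww' z unfolding K_def by auto
      show "(w,z) \<in> E"
      proof (rule ccontr)
        assume "(w,z) \<notin> E"
        then have "((w',z),(w',w)) \<in> G" using G_step1[of w' z w] wz ww' E_sym by auto
        then have "(w',w) \<in> M" using M_step[OF wzM] by blast
        then show False using M_swap ww' by blast
      qed
    qed
    then show ?case using step.IH by simp
  qed
  fix p q c assume p: "p \<in> K\<^sup>* `` {x}" and q: "q \<in> K\<^sup>* `` {x}" and c: "c \<in> Mt" "c \<notin> K\<^sup>* `` {x}"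
  have pM: "p \<in> Mt" "q \<in> Mt" using p q K_Mt x by auto
  have xpq: "(x,p) \<in> K\<^sup>*" "(x,q) \<in> K\<^sup>*" using p q by auto
  have "(p,c) \<in> E \<longleftrightarrow> (x,c) \<in> E" by (rule main[OF xpq(1) c])
  moreover have "(q,c) \<in> E \<longleftrightarrow> (x,c) \<in> E" by (rule main[OF xpq(2) c])
  ultimately have "(p,c) \<in> E \<longleftrightarrow> (q,c) \<in> E" by blast
  moreover have "(c,p) \<in> E \<longleftrightarrow> (p,c) \<in> E" "(c,q) \<in> E \<longleftrightarrow> (q,c) \<in> E" using E_sym by blast+
  ultimately show "((p,c) \<in> D \<longleftrightarrow> (q,c) \<in> D) \<and> ((c,p) \<in> D \<longleftrightarrow> (c,q) \<in> D)"
    using D_iff pM c by auto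
qed

lemma nocut:
  assumes S: "\<And>s t. s \<in> S \<Longrightarrow> t \<in> Mt \<Longrightarrow> t \<notin> S \<Longrightarrow> (s,t) \<notin> E"
  shows "Mt \<subseteq> S \<or> Mt \<inter> S = {}"
proof -
  have cross: "u \<in> S \<longleftrightarrow> v \<in> S" if "(u,v) \<in> E" "u \<in> Mt" "v \<in> Mt" for u v
    using S that E_sym by blast
  define P where "P = (\<lambda>e. (fst e \<in> S \<longleftrightarrow> a \<in> S) \<and> (snd e \<in> S \<longleftrightarrow> a \<in> S))"
  have inv: "P e'" if "((a,b),e') \<in> G\<^sup>+" for e'
    using that
  proof (induction rule: chain_induct)
    case base then show ?case unfolding P_def using cross abE a_Mt b_Mt by simp
  next
    case (step1 u v v')
    have "(u,v') \<in> M" using M_step[OF ab_M] step1(1) G_step1[OF step1(2,3,4)]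
      by (meson trancl_into_trancl)
    then show ?case using step1(5) cross[of u v'] M_Mt M_E unfolding P_def by auto
  next
    case (step2 u u' v)
    have "(u',v) \<in> M" using M_step[OF ab_M] step2(1) G_step2[OF step2(2,3,4)]
      by (meson trancl_into_trancl)
    then show ?case using step2(5) cross[of u' v] M_Mt M_E unfolding P_def by auto
  qed
  have "z \<in> S \<longleftrightarrow> a \<in> S" if z: "z \<in> Mt" for z
  proof -
    obtain w where zw: "(z,w) \<in> M" using z Mt_iff by blast
    from M_single[OF ab_M zw] show ?thesis
      using inv unfolding P_def by fastforce
  qed
  then show ?thesis by blast
qed

definition "R = {(x,y). x \<in> Mt \<and> y \<in> Mt \<and> x \<noteq> y \<and> (x,y) \<notin> E}"

definition "cc x = R\<^sup>* `` {x}"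

lemma R_sym: "(x,y) \<in> R \<Longrightarrow> (y,x) \<in> R"
  unfolding R_def using E_sym by blast

lemma Rs_sym: "(x,y) \<in> R\<^sup>* \<Longrightarrow> (y,x) \<in> R\<^sup>*"
  by (induction rule: rtrancl_induct) (auto intro: converse_rtrancl_into_rtrancl dest: R_sym)

lemma R_Mt: "(x,y) \<in> R\<^sup>* \<Longrightarrow> x \<in> Mt \<Longrightarrow> y \<in> Mt"
  by (induction rule: rtrancl_induct) (auto simp: R_def)

lemma cc_sub: "x \<in> Mt \<Longrightarrow> cc x \<subseteq> Mt"
  unfolding cc_def using R_Mt by blast

lemma cc_adj: "x \<in> Mt \<Longrightarrow> y \<in> cc x \<Longrightarrow> z \<in> Mt \<Longrightarrow> z \<notin> cc x \<Longrightarrow> (y,z) \<in> E"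
proof (rule ccontr)
  assume x: "x \<in> Mt" and y: "y \<in> cc x" and z: "z \<in> Mt" "z \<notin> cc x" and n: "(y,z) \<notin> E"
  have "y \<in> Mt" using y cc_sub x by blast
  moreover have "y \<noteq> z" using y z by blast
  ultimately have "(y,z) \<in> R" unfolding R_def using z n by blast
  then have "z \<in> cc x" using y unfolding cc_def by (meson Image_singleton_iff rtrancl.rtrancl_into_rtrancl)
  then show False using z by blast
qed

lemma cc_mod: "x \<in> Mt \<Longrightarrow> partitive Mt D (cc x)"
proof (rule partI)
  assume x: "x \<in> Mt"
  show "cc x \<subseteq> Mt" using cc_sub x .
  fix p q c assume p: "p \<in> cc x" and q: "q \<in> cc x" and c: "c \<in> Mt" "c \<notin> cc x"
  have pM: "p \<in> Mt" "q \<in> Mt" using p q cc_sub x by auto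
  have "(p,c) \<in> E" "(q,c) \<in> E" using cc_adj x p q c by auto
  then show "((p,c) \<in> D \<longleftrightarrow> (q,c) \<in> D) \<and> ((c,p) \<in> D \<longleftrightarrow> (c,q) \<in> D)"
    using D_iff pM c E_sym by auto
qed

lemma crossing:
  assumes "(p,q) \<in> R\<^sup>*" "p \<in> Y" "q \<notin> Y"
  shows "\<exists>p' q'. (p,p') \<in> R\<^sup>* \<and> (p',q') \<in> R \<and> p' \<in> Y \<and> q' \<notin> Y"
  using assms
proof (induction arbitrary: rule: rtrancl_induct)
  case base then show ?case by blast
next
  case (step y z)
  show ?case
  proof (cases "y \<in> Y")
    case True then show ?thesis using step by blast
  next
    case False
    then obtain p' q' where "(p,p') \<in> R\<^sup>*" "(p',q') \<in> R" "p' \<in> Y" "q' \<notin> Y" using step by blast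
    then show ?thesis by blast
  qed
qed

lemma cc_strong: assumes x: "x \<in> Mt" shows "strong_partitive Mt D (cc x)"
  unfolding strong_partitive_def
proof (intro conjI allI impI)
  show "partitive Mt D (cc x)" using cc_mod x .
  fix Y assume Y: "partitive Mt D Y \<and> cc x \<inter> Y \<noteq> {}"
  show "cc x \<subseteq> Y \<or> Y \<subseteq> cc x"
  proof (rule ccontr)
    assume "\<not> ?thesis"
    then obtain q y' where q: "q \<in> cc x" "q \<notin> Y" and y': "y' \<in> Y" "y' \<notin> cc x" by blast
    obtain p where p: "p \<in> cc x" "p \<in> Y" using Y by blast
    have "(p,q) \<in> R\<^sup>*" using p q unfolding cc_def by (meson Image_singleton_iff Rs_sym rtrancl_trans)
    then obtain p' q' where pq: "(p,p') \<in> R\<^sup>*" "(p',q') \<in> R" "p' \<in> Y" "q' \<notin> Y"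
      using crossing p q by blast
    have "q' \<in> cc x" using p(1) pq(1,2) unfolding cc_def
      by (meson Image_singleton_iff rtrancl.rtrancl_into_rtrancl rtrancl_trans)
    have YM: "Y \<subseteq> Mt" using Y part_sub by blast
    have q'M: "q' \<in> Mt" using pq(2) unfolding R_def by auto
    have "(q',y') \<in> E" using cc_adj[OF x \<open>q' \<in> cc x\<close>] y' YM by blast
    moreover have "(q',p') \<in> D \<longleftrightarrow> (q',y') \<in> D" using partD[of Mt D Y p' y' q'] Y pq y' q'M by blast
    ultimately have "(q',p') \<in> E" using D_iff q'M YM y' pq(3) D_E by blast
    then show False using pq(2) E_sym unfolding R_def by blast
  qed
qed

end


lemma max_of_two:
  assumes "W = X \<union> Y" "X \<inter> Y = {}" "X \<noteq> {}" "Y \<noteq> {}"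
    and sX: "strong_partitive W D X" and sY: "strong_partitive W D Y"
  shows "max_strong_partitive W D X"
  unfolding max_strong_partitive_def
proof (intro conjI allI impI)
  show "strong_partitive W D X" by fact
  show "X \<noteq> W" using assms(1-4) by blast
  fix Z assume Z: "strong_partitive W D Z \<and> Z \<noteq> W \<and> X \<subseteq> Z"
  show "Z = X"
  proof (rule ccontr)
    assume "Z \<noteq> X"
    then obtain z where z: "z \<in> Z" "z \<notin> X" using Z by blast
    have "partitive W D Z" using Z unfolding strong_partitive_def by blast
    then have ZW: "Z \<subseteq> W" by (rule part_sub)
    then have "z \<in> Y" using z assms(1) by blast
    then have "Y \<subseteq> Z \<or> Z \<subseteq> Y" using sY Z z unfolding strong_partitive_def by blast
    then show False
    proof
      assume "Y \<subseteq> Z" then show False using Z ZW assms(1) by blast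
    next
      assume "Z \<subseteq> Y" then show False using Z assms(2,3) by blast
    qed
  qed
qed

context r1
begin

lemma VS_iff: "u \<in> VS \<longleftrightarrow> u = a \<or> u = b"
  using VSab by blast

lemma a_cc: "a \<in> cc a" unfolding cc_def by simp
lemma b_cc: "b \<in> cc b" unfolding cc_def by simp

lemma caseA_b: assumes "cc a \<noteq> Mt" shows "b \<notin> cc a"
  using F1'[OF cc_mod[OF a_Mt] ab_M a_cc] assms by blast

lemma caseA_cover: "Mt \<subseteq> cc a \<union> cc b"
proof -
  define P where "P = (\<lambda>e. fst e \<in> cc a \<and> snd e \<in> cc b)"
  have inv: "P e'" if "((a,b),e') \<in> G\<^sup>+" for e'
    using that
  proof (induction rule: chain_induct)
    case base then show ?case unfolding P_def using a_cc b_cc by simp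
  next
    case (step1 u v v')
    have uv: "(u,v) \<in> M" using M_step[OF ab_M step1(1)] .
    have "(u,v') \<in> M" using M_step[OF uv] G_step1[OF step1(2,3,4)] by blast
    then have "v' \<in> Mt" "v \<in> Mt" using M_Mt uv by auto
    then have "v = v' \<or> (v,v') \<in> R" unfolding R_def using step1(4) by auto
    then show ?case using step1(5) unfolding P_def cc_def
      by (auto intro: rtrancl_into_rtrancl)
  next
    case (step2 u u' v)
    have uv: "(u,v) \<in> M" using M_step[OF ab_M step2(1)] .
    have "(u',v) \<in> M" using M_step[OF uv] G_step2[OF step2(2,3,4)] by blast
    then have "u' \<in> Mt" "u \<in> Mt" using M_Mt uv by auto
    then have "u = u' \<or> (u,u') \<in> R" unfolding R_def using step2(4) by auto
    then show ?case using step2(5) unfolding P_def cc_def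
      by (auto intro: rtrancl_into_rtrancl)
  qed
  show ?thesis
  proof
    fix z assume z: "z \<in> Mt"
    obtain w where zw: "(z,w) \<in> M" using z Mt_iff by blast
    from M_single[OF ab_M zw] show "z \<in> cc a \<union> cc b"
      using inv unfolding P_def by fastforce
  qed
qed

lemma caseA_disj: assumes "cc a \<noteq> Mt" shows "cc a \<inter> cc b = {}"
proof (rule ccontr)
  assume "cc a \<inter> cc b \<noteq> {}"
  then obtain z where "(a,z) \<in> R\<^sup>*" "(b,z) \<in> R\<^sup>*" unfolding cc_def by auto
  then have "(a,b) \<in> R\<^sup>*" using Rs_sym rtrancl_trans by metis
  then show False using caseA_b[OF assms] unfolding cc_def by auto
qed

lemma caseA:
  assumes A: "cc a \<noteq> Mt"
  shows "\<exists>F. partition_on Mt F \<and> F \<noteq> {Mt} \<and> (\<forall>X\<in>F. max_strong_partitive Mt D X) \<and>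
           graph_iso F (quotient_edges D F) VS (induced_edges E VS)"
proof -
  let ?X = "cc a" and ?Y = "cc b"
  have U: "Mt = ?X \<union> ?Y" using caseA_cover cc_sub a_Mt b_Mt by blast
  have dj: "?X \<inter> ?Y = {}" using caseA_disj[OF A] .
  have ne: "?X \<noteq> {}" "?Y \<noteq> {}" using a_cc b_cc by auto
  have XY: "?X \<noteq> ?Y" using dj ne by blast
  have sX: "strong_partitive Mt D ?X" using cc_strong a_Mt by blast
  have sY: "strong_partitive Mt D ?Y" using cc_strong b_Mt by blast
  have mX: "max_strong_partitive Mt D ?X" using max_of_two[OF U dj ne sX sY] .
  have mY: "max_strong_partitive Mt D ?Y" using max_of_two[of Mt ?Y ?X] U dj ne sX sY by blast
  let ?F = "{?X, ?Y}"
  have P: "partition_on Mt ?F" unfolding partition_on_def disjoint_def using U dj ne by auto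
  have mods: "\<And>Z. Z \<in> ?F \<Longrightarrow> partitive Mt D Z" using sX sY unfolding strong_partitive_def by blast
  have FM: "?F \<noteq> {Mt}" using A by auto
  define h where "h = (\<lambda>v. if v = a then ?X else ?Y)"
  have inj: "inj_on h VS" unfolding inj_on_def h_def using XY a_neq_b VS_iff by auto
  have img: "h ` VS = ?F" unfolding h_def using VS_iff a_neq_b by auto
  have bij: "bij_betw h VS ?F" unfolding bij_betw_def using inj img by blast
  have edges: "(u,v) \<in> induced_edges E VS \<longleftrightarrow> (h u, h v) \<in> quotient_edges D ?F" if "u \<in> VS" "v \<in> VS" for u v
  proof -
    have rep: "u \<in> h u" "v \<in> h v" "h u \<in> ?F" "h v \<in> ?F"
      using that a_cc b_cc VS_iff unfolding h_def by auto
    have "(h u, h v) \<in> quotient_edges D ?F \<longleftrightarrow> h u \<noteq> h v \<and> (u,v) \<in> D"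
      using QE_iff[OF P mods rep(3,4) rep(1,2)] by blast
    also have "\<dots> \<longleftrightarrow> u \<noteq> v \<and> (u,v) \<in> E"
      using that XY D_iff a_Mt b_Mt VS_iff unfolding h_def by auto
    also have "\<dots> \<longleftrightarrow> (u,v) \<in> induced_edges E VS"
      using that E_neq unfolding induced_edges_def by auto
    finally show ?thesis by simp
  qed
  have "graph_iso ?F (quotient_edges D ?F) VS (induced_edges E VS)"
    using graph_iso_inv[OF bij edges] by blast
  then show ?thesis using P FM mX mY by blast
qed

lemma conn:
  assumes "S \<subseteq> Mt" "S \<noteq> {}" "S \<noteq> Mt"
  shows "\<exists>s\<in>S. \<exists>t. t \<in> Mt \<and> t \<notin> S \<and> (s,t) \<in> E"
  using nocut[of S] assms by blast

lemma coconn: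
  assumes B: "cc a = Mt" and S: "S \<subseteq> Mt" "S \<noteq> {}" "S \<noteq> Mt"
  shows "\<exists>s\<in>S. \<exists>t. t \<in> Mt \<and> t \<notin> S \<and> (s,t) \<notin> E"
proof (cases "a \<in> S")
  case True
  obtain t where t: "t \<in> Mt" "t \<notin> S" using S by blast
  have "(a,t) \<in> R\<^sup>*" using t B unfolding cc_def by auto
  then obtain p' q' where "(p',q') \<in> R" "p' \<in> S" "q' \<notin> S" using crossing True t by blast
  then show ?thesis unfolding R_def by blast
next
  case False
  obtain s where s: "s \<in> S" using S by blast
  have "(a,s) \<in> R\<^sup>*" using s S B unfolding cc_def by auto
  then obtain p' q' where pq: "(p',q') \<in> R" "p' \<in> Mt - S" "q' \<notin> Mt - S"
    using crossing[of a s "Mt - S"] False a_Mt s by blast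
  then have "q' \<in> S" "(q',p') \<notin> E" unfolding R_def using E_sym by auto
  then show ?thesis using pq unfolding R_def by blast
qed

lemma overlap:
  assumes B: "cc a = Mt"
    and Y: "partitive Mt D Y" and Z: "partitive Mt D Z" and YM: "Y \<noteq> Mt" and ZM: "Z \<noteq> Mt"
    and r: "r \<in> Y" "r \<in> Z"
  shows "Y \<union> Z \<noteq> Mt"
proof
  assume U: "Y \<union> Z = Mt"
  have Ys: "Y \<subseteq> Mt" and Zs: "Z \<subseteq> Mt" using Y Z part_sub by auto
  let ?S = "Mt - Z"
  have S: "?S \<subseteq> Mt" "?S \<noteq> {}" "?S \<noteq> Mt" using Zs ZM r Ys by auto
  obtain q0 where q0: "q0 \<in> Mt" "q0 \<notin> Y" using Ys YM by blast
  have q0Z: "q0 \<in> Z" using q0 U by blast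
  have rM: "r \<in> Mt" using r Ys by blast
  have key: "(s,t) \<in> E \<longleftrightarrow> (r,q0) \<in> E" if s: "s \<in> ?S" and t: "t \<in> Mt" "t \<notin> ?S" for s t
  proof -
    have sY: "s \<in> Y" "s \<in> Mt" "s \<notin> Z" using s U by auto
    have tZ: "t \<in> Z" using t by auto
    have 1: "(t,s) \<in> D \<longleftrightarrow> (r,s) \<in> D" using partD[OF Z tZ r(2) sY(2,3)] by blast
    have 2: "(r,s) \<in> D \<longleftrightarrow> (q0,s) \<in> D" using partD[OF Z r(2) q0Z sY(2,3)] by blast
    have 3: "(s,q0) \<in> D \<longleftrightarrow> (r,q0) \<in> D" using partD[OF Y sY(1) r(1) q0] by blast
    have "(s,t) \<in> E \<longleftrightarrow> (t,s) \<in> E" "(q0,s) \<in> E \<longleftrightarrow> (s,q0) \<in> E" using E_sym by blast+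
    then show ?thesis using 1 2 3 D_iff sY t q0 rM by auto
  qed
  show False
  proof (cases "(r,q0) \<in> E")
    case True
    obtain s t where "s \<in> ?S" "t \<in> Mt" "t \<notin> ?S" "(s,t) \<notin> E" using coconn[OF B S] by blast
    then show False using key True by blast
  next
    case False
    obtain s t where "s \<in> ?S" "t \<in> Mt" "t \<notin> ?S" "(s,t) \<in> E" using conn[OF S] by blast
    then show False using key False by blast
  qed
qed

definition "PP x = \<Union>{Y. partitive Mt D Y \<and> Y \<noteq> Mt \<and> x \<in> Y}"

lemma PP_mod: "partitive Mt D (PP x)"
  unfolding PP_def by (rule part_Union[where x = x]) blast

lemma PP_sub: "PP x \<subseteq> Mt"
  using part_sub[OF PP_mod] .

lemma PP_in: "x \<in> Mt \<Longrightarrow> x \<in> PP x"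
proof -
  assume x: "x \<in> Mt"
  have "{x} \<noteq> Mt"
  proof
    assume "{x} = Mt"
    then have "a = x" "b = x" using a_Mt b_Mt by auto
    then show False using a_neq_b by simp
  qed
  then show ?thesis unfolding PP_def using part_single[OF x] by blast
qed

lemma PP_ne: "x \<in> Mt \<Longrightarrow> PP x \<noteq> Mt"
proof
  assume x: "x \<in> Mt" and eq: "PP x = Mt"
  obtain z where xz: "(x,z) \<in> M" using x Mt_iff by blast
  then have "z \<in> Mt" using M_Mt by blast
  then obtain Y where Y: "partitive Mt D Y" "Y \<noteq> Mt" "x \<in> Y" "z \<in> Y" using eq unfolding PP_def by auto
  then show False using F1'[OF Y(1) xz Y(3,4)] by blast
qed

lemma PP_big:
  assumes B: "cc a = Mt" and x: "x \<in> Mt" and Y: "partitive Mt D Y" "Y \<noteq> Mt" and r: "r \<in> Y" "r \<in> PP x"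
  shows "Y \<subseteq> PP x"
proof -
  have "partitive Mt D (Y \<union> PP x)" using part_Un[OF Y(1) PP_mod r] .
  moreover have "Y \<union> PP x \<noteq> Mt" using overlap[OF B Y(1) PP_mod Y(2) PP_ne[OF x] r] .
  moreover have "x \<in> Y \<union> PP x" using PP_in[OF x] by blast
  ultimately have "Y \<union> PP x \<subseteq> PP x" unfolding PP_def by blast
  then show ?thesis by blast
qed

lemma PP_eq:
  assumes B: "cc a = Mt" and x: "x \<in> Mt" and y: "y \<in> PP x"
  shows "PP y = PP x"
proof -
  have yM: "y \<in> Mt" using y PP_sub by blast
  have 1: "PP y \<subseteq> PP x" using PP_big[OF B x PP_mod PP_ne[OF yM] PP_in[OF yM] y] .
  have 2: "PP x \<subseteq> PP y" using PP_big[OF B yM PP_mod PP_ne[OF x] y PP_in[OF yM]] .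
  show ?thesis using 1 2 by blast
qed

lemma PP_strong:
  assumes B: "cc a = Mt" and x: "x \<in> Mt"
  shows "strong_partitive Mt D (PP x)"
  unfolding strong_partitive_def
proof (intro conjI allI impI)
  show "partitive Mt D (PP x)" using PP_mod .
  fix Y assume Y: "partitive Mt D Y \<and> PP x \<inter> Y \<noteq> {}"
  show "PP x \<subseteq> Y \<or> Y \<subseteq> PP x"
  proof (cases "Y = Mt")
    case True then show ?thesis using PP_sub by blast
  next
    case False
    obtain r where "r \<in> Y" "r \<in> PP x" using Y by blast
    then show ?thesis using PP_big[OF B x _ False] Y by blast
  qed
qed

lemma PP_max:
  assumes B: "cc a = Mt" and x: "x \<in> Mt"
  shows "max_strong_partitive Mt D (PP x)"
  unfolding max_strong_partitive_def
proof (intro conjI allI impI)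
  show "strong_partitive Mt D (PP x)" using PP_strong[OF B x] .
  show "PP x \<noteq> Mt" using PP_ne[OF x] .
  fix Y assume Y: "strong_partitive Mt D Y \<and> Y \<noteq> Mt \<and> PP x \<subseteq> Y"
  then have "partitive Mt D Y" "Y \<noteq> Mt" "x \<in> Y" using PP_in[OF x] unfolding strong_partitive_def by blast+
  then have "Y \<in> {Y. partitive Mt D Y \<and> Y \<noteq> Mt \<and> x \<in> Y}" by simp
  then have "Y \<subseteq> PP x" unfolding PP_def by (rule Union_upper)
  then show "Y = PP x" using Y by blast
qed

lemma PP_part:
  assumes B: "cc a = Mt"
  shows "partition_on Mt (PP ` Mt)"
  unfolding partition_on_def disjoint_def
proof (intro conjI ballI impI)
  show "\<Union> (PP ` Mt) = Mt" using PP_sub PP_in by blast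
  show "{} \<notin> PP ` Mt" using PP_in by blast
  fix X Y assume X: "X \<in> PP ` Mt" and Y: "Y \<in> PP ` Mt" and XY: "X \<noteq> Y"
  show "X \<inter> Y = {}"
  proof (rule ccontr)
    assume "X \<inter> Y \<noteq> {}"
    then obtain z where z: "z \<in> X" "z \<in> Y" by blast
    obtain x y where "x \<in> Mt" "y \<in> Mt" "X = PP x" "Y = PP y" using X Y by blast
    then show False using PP_eq[OF B] z XY by metis
  qed
qed

lemma PP_cross:
  assumes B: "cc a = Mt" and pq: "p \<in> Mt" "q \<in> Mt" "(p,q) \<in> E" "PP p \<noteq> PP q"
  shows "(p,q) \<in> M"
proof (rule ccontr)
  assume n: "(p,q) \<notin> M"
  then have "(p,q) \<in> K" unfolding K_def using pq by auto
  then have q: "q \<in> K\<^sup>* `` {p}" by auto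
  have "K\<^sup>* `` {p} \<subseteq> PP p"
    using PP_big[OF B pq(1) KM[OF pq(1)] KC_ne[OF pq(1)], of p] PP_in[OF pq(1)] by auto
  then have "q \<in> PP p" using q by blast
  then have "PP q = PP p" using PP_eq[OF B pq(1)] by blast
  then show False using pq(4) by simp
qed

lemma caseB:
  assumes B: "cc a = Mt"
  shows "\<exists>F. partition_on Mt F \<and> F \<noteq> {Mt} \<and> (\<forall>X\<in>F. max_strong_partitive Mt D X) \<and>
           indecomposable F (quotient_edges D F) \<and>
           (\<exists>V'. V' \<subseteq> Mt \<and> induced_edges E V' \<subseteq> M \<and>
                graph_iso F (quotient_edges D F) V' (induced_edges E V'))"
proof -
  let ?F = "PP ` Mt"
  have P: "partition_on Mt ?F" using PP_part[OF B] .
  have mods: "\<And>X. X \<in> ?F \<Longrightarrow> partitive Mt D X" using PP_mod by blast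
  have FM: "?F \<noteq> {Mt}"
  proof
    assume "?F = {Mt}"
    then have "PP a \<in> {Mt}" using a_Mt by blast
    then show False using PP_ne[OF a_Mt] by simp
  qed
  have mx: "\<forall>X\<in>?F. max_strong_partitive Mt D X" using PP_max[OF B] by blast
  have ind: "indecomposable ?F (quotient_edges D ?F)"
    unfolding indecomposable_def
  proof (intro allI impI)
    fix XX assume XX: "partitive ?F (quotient_edges D ?F) XX"
    show "XX = {} \<or> (\<exists>x. XX = {x}) \<or> XX = ?F"
    proof (rule ccontr)
      assume n: "\<not> ?thesis"
      have XF: "XX \<subseteq> ?F" using part_sub[OF XX] .
      obtain Z where Z: "Z \<in> ?F" "Z \<notin> XX" using n XF by blast
      obtain X1 X2 where X12: "X1 \<in> XX" "X2 \<in> XX" "X1 \<noteq> X2" using n by blast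
      have U: "partitive Mt D (\<Union>XX)" using quot_union_part[OF P mods XX] .
      obtain z where z: "z \<in> Z" using Z P unfolding partition_on_def by blast
      have "z \<notin> \<Union>XX"
      proof
        assume "z \<in> \<Union>XX"
        then obtain X3 where "X3 \<in> XX" "z \<in> X3" by blast
        then have X3: "X3 \<in> ?F" "X3 \<noteq> Z" "z \<in> X3" using XF Z(2) by auto
        have d: "disjoint ?F" using P unfolding partition_on_def by blast
        have "X3 \<inter> Z = {}" using disjointD[OF d X3(1) Z(1) X3(2)] .
        then show False using X3(3) z by blast
      qed
      moreover have "z \<in> Mt" using z Z PP_sub by blast
      ultimately have UM: "\<Union>XX \<noteq> Mt" by blast
      obtain x1 where x1: "x1 \<in> Mt" "X1 = PP x1" using X12 XF by blast
      obtain x2 where x2: "x2 \<in> Mt" "X2 = PP x2" using X12 XF by blast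
      have "\<Union>XX \<subseteq> PP x1"
        using PP_big[OF B x1(1) U UM, of x1] PP_in[OF x1(1)] x1 X12 by blast
      then have "x2 \<in> PP x1" using PP_in[OF x2(1)] x2 X12 by blast
      then have "PP x2 = PP x1" using PP_eq[OF B x1(1)] by blast
      then show False using x1 x2 X12 by simp
    qed
  qed
  define g where "g = (\<lambda>X::'a set. SOME x. x \<in> X)"
  have gX: "g X \<in> X" if "X \<in> ?F" for X
  proof -
    have "X \<noteq> {}" using that P unfolding partition_on_def by blast
    then show ?thesis unfolding g_def by (meson ex_in_conv someI_ex)
  qed
  have gPP: "PP (g X) = X" if "X \<in> ?F" for X
    using that gX[OF that] PP_eq[OF B] by blast
  have gM: "g X \<in> Mt" if "X \<in> ?F" for X using gX[OF that] that PP_sub by blast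
  let ?V = "g ` ?F"
  have inj: "inj_on g ?F" unfolding inj_on_def using gPP by metis
  have bij: "bij_betw g ?F ?V" using inj by (simp add: bij_betw_def)
  have VM: "?V \<subseteq> Mt" using gM by blast
  have VE: "induced_edges E ?V \<subseteq> M"
  proof
    fix e assume "e \<in> induced_edges E ?V"
    then obtain X Y where XY: "X \<in> ?F" "Y \<in> ?F" "e = (g X, g Y)" "(g X, g Y) \<in> E"
      unfolding induced_edges_def by auto
    have "X \<noteq> Y" using XY E_irr by auto
    then have "PP (g X) \<noteq> PP (g Y)" using gPP XY by simp
    then show "e \<in> M" using PP_cross[OF B gM[OF XY(1)] gM[OF XY(2)] XY(4)] XY by simp
  qed
  have edges: "(X,Y) \<in> quotient_edges D ?F \<longleftrightarrow> (g X, g Y) \<in> induced_edges E ?V"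
    if "X \<in> ?F" "Y \<in> ?F" for X Y
  proof -
    have "(X,Y) \<in> quotient_edges D ?F \<longleftrightarrow> X \<noteq> Y \<and> (g X, g Y) \<in> D"
      using QE_iff[OF P mods that gX[OF that(1)] gX[OF that(2)]] .
    also have "\<dots> \<longleftrightarrow> (g X, g Y) \<in> E"
      using D_iff gM that E_irr by auto
    also have "\<dots> \<longleftrightarrow> (g X, g Y) \<in> induced_edges E ?V"
      using that unfolding induced_edges_def by auto
    finally show ?thesis .
  qed
  have "graph_iso ?F (quotient_edges D ?F) ?V (induced_edges E ?V)"
    unfolding graph_iso_def using bij edges by blast
  then show ?thesis using P FM mx ind VM VE by blast
qed

lemma r1_main:
  "\<exists>F. partition_on Mt F \<and> F \<noteq> {Mt} \<and> (\<forall>X\<in>F. max_strong_partitive Mt D X) \<and>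
     (graph_iso F (quotient_edges D F) VS (induced_edges E VS) \<or>
      (indecomposable F (quotient_edges D F) \<and>
       (\<exists>V'. V' \<subseteq> Mt \<and> induced_edges E V' \<subseteq> M \<and>
            graph_iso F (quotient_edges D F) V' (induced_edges E V'))))"
proof (cases "cc a = Mt")
  case True then show ?thesis using caseB by blast
next
  case False then show ?thesis using caseA by blast
qed

end


context ug
begin

lemma triangle:
  assumes ab: "(a,b) \<in> E" and ac: "(a,c) \<in> E" and bc: "(b,c) \<in> E"
    and n1: "((b,c),(b,a)) \<notin> G\<^sup>+" and n2: "((b,c),(a,c)) \<notin> G\<^sup>+"
    and ch: "((b,c),(b',c')) \<in> G\<^sup>+"
  shows "(a,b') \<in> E \<and> (a,c') \<in> E \<and> ((a,b),(a,b')) \<in> G\<^sup>+ \<and> ((a,c),(a,c')) \<in> G\<^sup>+"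
proof -
  define P where "P = (\<lambda>e. (a, fst e) \<in> E \<and> (a, snd e) \<in> E \<and>
      ((a,b),(a, fst e)) \<in> G\<^sup>+ \<and> ((a,c),(a, snd e)) \<in> G\<^sup>+)"
  have "P (b',c')"
    using ch
  proof (induction rule: chain_induct)
    case base then show ?case unfolding P_def using ab ac T_refl by simp
  next
    case (step1 u v v')
    have Pu: "(a,u) \<in> E" "(a,v) \<in> E" "((a,b),(a,u)) \<in> G\<^sup>+" "((a,c),(a,v)) \<in> G\<^sup>+"
      using step1(5) unfolding P_def by auto
    have chv': "((b,c),(u,v')) \<in> G\<^sup>+" using step1(1) G_step1[OF step1(2,3,4)] by (meson trancl_into_trancl)
    have 1: "(a,v') \<in> E"
    proof (rule ccontr)
      assume "(a,v') \<notin> E"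
      then have "((u,v'),(u,a)) \<in> G" using G_step1[of u v' a] step1(3) Pu(1) E_sym by blast
      then have "((b,c),(u,a)) \<in> G\<^sup>+" using chv' by (meson trancl_into_trancl)
      moreover have "((u,a),(b,a)) \<in> G\<^sup>+" using T_sym[OF T_swap[OF Pu(3)]] by simp
      ultimately show False using n1 T_trans by blast
    qed
    have "((a,v),(a,v')) \<in> G" using G_step1[OF Pu(2) 1 step1(4)] .
    then have 2: "((a,c),(a,v')) \<in> G\<^sup>+" using Pu(4) by (meson trancl_into_trancl)
    show ?case unfolding P_def using Pu 1 2 by simp
  next
    case (step2 u u' v)
    have Pu: "(a,u) \<in> E" "(a,v) \<in> E" "((a,b),(a,u)) \<in> G\<^sup>+" "((a,c),(a,v)) \<in> G\<^sup>+"
      using step2(5) unfolding P_def by auto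
    have chu': "((b,c),(u',v)) \<in> G\<^sup>+" using step2(1) G_step2[OF step2(2,3,4)] by (meson trancl_into_trancl)
    have 1: "(a,u') \<in> E"
    proof (rule ccontr)
      assume "(a,u') \<notin> E"
      then have "((u',v),(a,v)) \<in> G" using G_step2[of u' v a] step2(3) Pu(2) E_sym by blast
      then have "((b,c),(a,v)) \<in> G\<^sup>+" using chu' by (meson trancl_into_trancl)
      moreover have "((a,v),(a,c)) \<in> G\<^sup>+" using T_sym[OF Pu(4)] .
      ultimately show False using n2 T_trans by blast
    qed
    have "((a,u),(a,u')) \<in> G" using G_step1[OF Pu(1) 1 step2(4)] .
    then have 2: "((a,b),(a,u')) \<in> G\<^sup>+" using Pu(3) by (meson trancl_into_trancl)
    show ?case unfolding P_def using Pu 1 2 by simp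
  qed
  then show ?thesis unfolding P_def by simp
qed

end

locale r2 = mp E VS for E :: "('a \<times> 'a) set" and VS +
  assumes finVS: "finite VS" and card3: "card VS \<ge> 3"
    and compl: "\<And>u v. u \<in> VS \<Longrightarrow> v \<in> VS \<Longrightarrow> u \<noteq> v \<Longrightarrow> (u,v) \<in> E"
    and dist: "\<And>u v u' v'. u \<in> VS \<Longrightarrow> v \<in> VS \<Longrightarrow> u' \<in> VS \<Longrightarrow> v' \<in> VS \<Longrightarrow> u \<noteq> v \<Longrightarrow> u' \<noteq> v'
                 \<Longrightarrow> ((u,v),(u',v')) \<in> G\<^sup>+ \<Longrightarrow> {u,v} = {u',v'}"
begin

lemma third: assumes "u \<in> VS" "v \<in> VS" obtains w where "w \<in> VS" "w \<noteq> u" "w \<noteq> v"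
proof -
  have "card (VS - {u,v}) \<ge> 1"
  proof -
    have "card {u,v} \<le> 2" by (simp add: card_insert_le_m1)
    then have "card (VS - {u,v}) \<ge> card VS - 2"
      using diff_card_le_card_Diff[of "{u,v}" VS] by simp
    then show ?thesis using card3 by simp
  qed
  then have "VS - {u,v} \<noteq> {}"
  proof (intro notI)
    assume "1 \<le> card (VS - {u, v})" "VS - {u,v} = {}"
    then show False by simp
  qed
  then show ?thesis using that by blast
qed

lemma IE_iff: "(u,v) \<in> induced_edges E VS \<longleftrightarrow> u \<in> VS \<and> v \<in> VS \<and> u \<noteq> v"
  unfolding induced_edges_def using compl E_neq by auto

lemma IE_M: "u \<in> VS \<Longrightarrow> v \<in> VS \<Longrightarrow> u \<noteq> v \<Longrightarrow> (u,v) \<in> M"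
  unfolding M_def using IE_iff T_refl compl by blast

definition "XX v = {x \<in> Mt. \<forall>w\<in>VS. w \<noteq> v \<longrightarrow> (x,w) \<in> E \<and> ((v,w),(x,w)) \<in> G\<^sup>+}"

lemma XX_sub: "XX v \<subseteq> Mt" unfolding XX_def by auto

lemma v_in: assumes v: "v \<in> VS" shows "v \<in> XX v"
proof -
  obtain w where "w \<in> VS" "w \<noteq> v" using third[OF v v] by blast
  then have "v \<in> Mt" using IE_M[OF v] M_Mt by blast
  then show ?thesis unfolding XX_def using compl v T_refl by auto
qed

lemma cover:
  assumes x: "x \<in> Mt" shows "\<exists>v\<in>VS. x \<in> XX v"
proof -
  obtain y where xy: "(x,y) \<in> M" using x Mt_iff by blast
  then obtain s where s: "s \<in> induced_edges E VS" "(s,(x,y)) \<in> G\<^sup>+"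
    unfolding M_def by auto
  obtain i j where "s = (i,j)" by (cases s)
  then have ij: "i \<in> VS" "j \<in> VS" "i \<noteq> j" "((i,j),(x,y)) \<in> G\<^sup>+"
    using s IE_iff by auto
  have C1: "(k,x) \<in> E \<and> (k,y) \<in> E \<and> ((k,i),(k,x)) \<in> G\<^sup>+ \<and> ((k,j),(k,y)) \<in> G\<^sup>+"
    if k: "k \<in> VS" "k \<noteq> i" "k \<noteq> j" for k
  proof (rule triangle)
    show "(k,i) \<in> E" "(k,j) \<in> E" "(i,j) \<in> E" using compl k ij by auto
    show "((i,j),(i,k)) \<notin> G\<^sup>+" using dist[of i j i k] k ij by (auto simp: doubleton_eq_iff)
    show "((i,j),(k,j)) \<notin> G\<^sup>+" using dist[of i j k j] k ij by (auto simp: doubleton_eq_iff)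
    show "((i,j),(x,y)) \<in> G\<^sup>+" using ij by simp
  qed
  have "\<forall>w\<in>VS. w \<noteq> i \<longrightarrow> (x,w) \<in> E \<and> ((i,w),(x,w)) \<in> G\<^sup>+"
  proof (intro ballI impI)
    fix w assume w: "w \<in> VS" "w \<noteq> i"
    show "(x,w) \<in> E \<and> ((i,w),(x,w)) \<in> G\<^sup>+"
    proof (cases "w = j")
      case False
      then have "(w,x) \<in> E" "((w,i),(w,x)) \<in> G\<^sup>+" using C1 w by auto
      then show ?thesis using E_sym T_swap' by blast
    next
      case True
      obtain k where k: "k \<in> VS" "k \<noteq> i" "k \<noteq> j" using third[OF ij(1,2)] by blast
      note c = C1[OF k]
      have ki: "((i,k),(x,k)) \<in> G\<^sup>+" and kj: "((j,k),(y,k)) \<in> G\<^sup>+" using c T_swap' by blast+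
      have ji: "((j,i),(y,x)) \<in> G\<^sup>+" using ij T_swap' by blast
      have "(x,j) \<in> E \<and> (x,k) \<in> E \<and> ((x,y),(x,j)) \<in> G\<^sup>+ \<and> ((x,k),(x,k)) \<in> G\<^sup>+"
      proof (rule triangle)
        show "(x,y) \<in> E" using M_E xy by blast
        show "(x,k) \<in> E" "(y,k) \<in> E" using c E_sym by auto
        show "((y,k),(y,x)) \<notin> G\<^sup>+"
        proof
          assume "((y,k),(y,x)) \<in> G\<^sup>+"
          then have "((j,k),(j,i)) \<in> G\<^sup>+" using kj ji T_sym T_trans by meson
          then show False using dist[of j k j i] k ij by (auto simp: doubleton_eq_iff)
        qed
        show "((y,k),(x,k)) \<notin> G\<^sup>+"
        proof
          assume "((y,k),(x,k)) \<in> G\<^sup>+"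
          then have "((j,k),(i,k)) \<in> G\<^sup>+" using kj ki T_sym T_trans by meson
          then show False using dist[of j k i k] k ij by (auto simp: doubleton_eq_iff)
        qed
        show "((y,k),(j,k)) \<in> G\<^sup>+" using T_sym[OF kj] .
      qed
      then show ?thesis using True ij(4) T_trans by blast
    qed
  qed
  then have "x \<in> XX i" unfolding XX_def using x by blast
  then show ?thesis using ij by blast
qed

lemma uniq: assumes "x \<in> XX u" "x \<in> XX v" "u \<in> VS" "v \<in> VS" shows "u = v"
proof (rule ccontr)
  assume uv: "u \<noteq> v"
  obtain w where w: "w \<in> VS" "w \<noteq> u" "w \<noteq> v" using third[OF assms(3,4)] by blast
  have "((u,w),(x,w)) \<in> G\<^sup>+" "((v,w),(x,w)) \<in> G\<^sup>+" using assms w unfolding XX_def by auto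
  then have "((u,w),(v,w)) \<in> G\<^sup>+" using T_sym T_trans by blast
  then show False using dist[of u w v w] assms w uv by (auto simp: doubleton_eq_iff)
qed

lemma crossE:
  assumes x: "x \<in> XX i" and y: "y \<in> XX j" and ij: "i \<in> VS" "j \<in> VS" "i \<noteq> j"
  shows "(x,y) \<in> E \<and> ((i,j),(x,y)) \<in> G\<^sup>+"
proof -
  obtain k where k: "k \<in> VS" "k \<noteq> i" "k \<noteq> j" using third[OF ij(1,2)] by blast
  have xj: "(x,j) \<in> E" "((i,j),(x,j)) \<in> G\<^sup>+" using x ij unfolding XX_def by auto
  have xk: "(x,k) \<in> E" "((i,k),(x,k)) \<in> G\<^sup>+" using x ij k unfolding XX_def by auto
  have yk: "((j,k),(y,k)) \<in> G\<^sup>+" using y ij k unfolding XX_def by auto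
  have "(x,y) \<in> E \<and> (x,k) \<in> E \<and> ((x,j),(x,y)) \<in> G\<^sup>+ \<and> ((x,k),(x,k)) \<in> G\<^sup>+"
  proof (rule triangle)
    show "(x,j) \<in> E" "(x,k) \<in> E" using xj xk by auto
    show "(j,k) \<in> E" using compl k ij by auto
    show "((j,k),(j,x)) \<notin> G\<^sup>+"
    proof
      assume "((j,k),(j,x)) \<in> G\<^sup>+"
      moreover have "((j,i),(j,x)) \<in> G\<^sup>+" using T_swap'[OF xj(2)] .
      ultimately have "((j,k),(j,i)) \<in> G\<^sup>+" using T_sym T_trans by meson
      then show False using dist[of j k j i] k ij by (auto simp: doubleton_eq_iff)
    qed
    show "((j,k),(x,k)) \<notin> G\<^sup>+"
    proof
      assume "((j,k),(x,k)) \<in> G\<^sup>+"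
      then have "((j,k),(i,k)) \<in> G\<^sup>+" using xk T_sym T_trans by meson
      then show False using dist[of j k i k] k ij by (auto simp: doubleton_eq_iff)
    qed
    show "((j,k),(y,k)) \<in> G\<^sup>+" using yk .
  qed
  then show ?thesis using xj T_trans by blast
qed

lemma XX_mod2:
  assumes u: "u \<in> VS" and w: "w \<in> VS"
  shows "partitive Mt D (XX u \<union> XX w)"
proof (rule partI)
  show "XX u \<union> XX w \<subseteq> Mt" using XX_sub by blast
  fix p q c assume p: "p \<in> XX u \<union> XX w" and q: "q \<in> XX u \<union> XX w" and c: "c \<in> Mt" "c \<notin> XX u \<union> XX w"
  obtain s where s: "s \<in> VS" "c \<in> XX s" using cover c by blast
  have adj: "(z,c) \<in> E" if z: "z \<in> XX u \<union> XX w" for z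
  proof -
    obtain t where t: "t \<in> VS" "z \<in> XX t" "t \<noteq> s" using z u w s c by blast
    show ?thesis using crossE[OF t(2) s(2) t(1) s(1) t(3)] by blast
  qed
  have pq: "p \<in> Mt" "q \<in> Mt" using p q XX_sub by blast+
  show "((p,c) \<in> D \<longleftrightarrow> (q,c) \<in> D) \<and> ((c,p) \<in> D \<longleftrightarrow> (c,q) \<in> D)"
    using adj[OF p] adj[OF q] D_iff pq c E_sym by auto
qed

lemma XX_mod: "v \<in> VS \<Longrightarrow> partitive Mt D (XX v)"
  using XX_mod2[of v v] by simp

lemma XX_strong: assumes v: "v \<in> VS" shows "strong_partitive Mt D (XX v)"
  unfolding strong_partitive_def
proof (intro conjI allI impI)
  show "partitive Mt D (XX v)" using XX_mod[OF v] .
  fix Y assume Y: "partitive Mt D Y \<and> XX v \<inter> Y \<noteq> {}"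
  show "XX v \<subseteq> Y \<or> Y \<subseteq> XX v"
  proof (rule ccontr)
    assume "\<not> ?thesis"
    then obtain x z where x: "x \<in> XX v" "x \<notin> Y" and z: "z \<in> Y" "z \<notin> XX v" by blast
    obtain y where y: "y \<in> XX v" "y \<in> Y" using Y by blast
    have "z \<in> Mt" using z Y part_sub by blast
    then obtain u where u: "u \<in> VS" "z \<in> XX u" using cover by blast
    have uv: "u \<noteq> v" using u z by blast
    have yz: "(y,z) \<in> E" "((v,u),(y,z)) \<in> G\<^sup>+" using crossE[OF y(1) u(2) v u(1)] uv by auto
    have xz: "((v,u),(x,z)) \<in> G\<^sup>+" using crossE[OF x(1) u(2) v u(1)] uv by auto
    have "(y,z) \<in> M" using M_step[OF IE_M[OF v u(1)] yz(2)] uv by blast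
    moreover have "((y,z),(x,z)) \<in> G\<^sup>+" using yz xz T_sym T_trans by blast
    ultimately have "x \<in> Y" using F1[of Y y z x z] Y y z by blast
    then show False using x by blast
  qed
qed

lemma XX_max: assumes v: "v \<in> VS" shows "max_strong_partitive Mt D (XX v)"
  unfolding max_strong_partitive_def
proof (intro conjI allI impI)
  show "strong_partitive Mt D (XX v)" using XX_strong[OF v] .
  obtain u where u: "u \<in> VS" "u \<noteq> v" using third[OF v v] by blast
  have "u \<in> Mt" using v_in[OF u(1)] XX_sub by blast
  moreover have "u \<notin> XX v" using uniq v_in u v by blast
  ultimately show "XX v \<noteq> Mt" by blast
  fix Z assume Z: "strong_partitive Mt D Z \<and> Z \<noteq> Mt \<and> XX v \<subseteq> Z"
  show "Z = XX v"
  proof (rule ccontr)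
    assume "Z \<noteq> XX v"
    then obtain z where z: "z \<in> Z" "z \<notin> XX v" using Z by blast
    have "partitive Mt D Z" using Z unfolding strong_partitive_def by blast
    then have ZM: "Z \<subseteq> Mt" by (rule part_sub)
    obtain u where u: "u \<in> VS" "z \<in> XX u" using cover z ZM by blast
    have uv: "u \<noteq> v" using u z by blast
    obtain t where t: "t \<in> Mt" "t \<notin> Z" using Z ZM by blast
    obtain s where s: "s \<in> VS" "t \<in> XX s" using cover t by blast
    have sv: "s \<noteq> v" using s t Z by blast
    obtain w where w: "w \<in> VS" "w \<noteq> u" "w \<noteq> v" "t \<in> XX u \<union> XX w"
    proof (cases "s = u")
      case True
      obtain w where "w \<in> VS" "w \<noteq> u" "w \<noteq> v" using third[OF u(1) v] by blast
      then show ?thesis using that True s by blast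
    next
      case False then show ?thesis using that s sv by blast
    qed
    let ?Y = "XX u \<union> XX w"
    have "partitive Mt D ?Y" using XX_mod2 u w by blast
    moreover have "?Y \<inter> Z \<noteq> {}" using z u by blast
    ultimately have "Z \<subseteq> ?Y \<or> ?Y \<subseteq> Z" using Z unfolding strong_partitive_def by blast
    then show False
    proof
      assume "Z \<subseteq> ?Y"
      then have "v \<in> ?Y" using v_in[OF v] Z by blast
      then have "v \<in> XX u \<or> v \<in> XX w" by blast
      then show False
      proof
        assume "v \<in> XX u" then show False using uniq[OF v_in[OF v] _ v u(1)] uv by blast
      next
        assume "v \<in> XX w" then show False using uniq[OF v_in[OF v] _ v w(1)] w(3) by blast
      qed
    next
      assume "?Y \<subseteq> Z" then show False using w t by blast
    qed
  qed
qed

lemma r2_main: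
  "\<exists>F. partition_on Mt F \<and> F \<noteq> {Mt} \<and> (\<forall>X\<in>F. max_strong_partitive Mt D X) \<and>
     graph_iso F (quotient_edges D F) VS (induced_edges E VS)"
proof -
  let ?F = "XX ` VS"
  have P: "partition_on Mt ?F"
    unfolding partition_on_def disjoint_def
  proof (intro conjI ballI impI)
    show "\<Union>?F = Mt" using XX_sub cover by blast
    show "{} \<notin> ?F" using v_in by blast
    fix X Y assume "X \<in> ?F" "Y \<in> ?F" "X \<noteq> Y"
    then show "X \<inter> Y = {}" using uniq by blast
  qed
  have mods: "\<And>X. X \<in> ?F \<Longrightarrow> partitive Mt D X" using XX_mod by blast
  have mx: "\<forall>X\<in>?F. max_strong_partitive Mt D X" using XX_max by blast
  have FM: "?F \<noteq> {Mt}"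
  proof
    assume a: "?F = {Mt}"
    obtain v where "v \<in> VS" using third[of _ _] card3 by (metis card.empty equals0I not_numeral_le_zero)
    then have "XX v = Mt" using a by blast
    then show False using XX_max[OF \<open>v \<in> VS\<close>] unfolding max_strong_partitive_def by blast
  qed
  have inj: "inj_on XX VS" unfolding inj_on_def using uniq v_in by metis
  have bij: "bij_betw XX VS ?F" using inj by (simp add: bij_betw_def)
  have edges: "(u,v) \<in> induced_edges E VS \<longleftrightarrow> (XX u, XX v) \<in> quotient_edges D ?F"
    if "u \<in> VS" "v \<in> VS" for u v
  proof -
    have "(XX u, XX v) \<in> quotient_edges D ?F \<longleftrightarrow> XX u \<noteq> XX v \<and> (u,v) \<in> D"
      using QE_iff[OF P mods _ _ v_in v_in] that by blast
    also have "\<dots> \<longleftrightarrow> u \<noteq> v \<and> (u,v) \<in> E"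
      using that inj D_iff v_in XX_sub unfolding inj_on_def by blast
    also have "\<dots> \<longleftrightarrow> (u,v) \<in> induced_edges E VS" using IE_iff that compl by blast
    finally show ?thesis by simp
  qed
  have "graph_iso ?F (quotient_edges D ?F) VS (induced_edges E VS)"
    using graph_iso_inv[OF bij edges] by blast
  then show ?thesis using P FM mx by blast
qed

end


theorem theorem4p4:
  fixes V :: "'a set" and E :: "('a \<times> 'a) set" and VS :: "'a set"
  assumes "undirected V E"
    and "simplex V E VS"
  defines "M \<equiv> multiplex E VS"
  defines "Mt \<equiv> Field M"
  shows "\<exists>F. partition_on Mt F \<and> F \<noteq> {Mt} \<and>
            (\<forall>X\<in>F. max_strong_partitive Mt (induced_edges E Mt) X) \<and>
            (simplex_rank VS = 1 \<longrightarrow>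
               graph_iso F (quotient_edges (induced_edges E Mt) F) VS (induced_edges E VS) \<or>
               (indecomposable F (quotient_edges (induced_edges E Mt) F) \<and>
                (\<exists>V'. V' \<subseteq> Mt \<and> induced_edges E V' \<subseteq> M \<and>
                   graph_iso F (quotient_edges (induced_edges E Mt) F) V' (induced_edges E V')))) \<and>
            (simplex_rank VS \<ge> 2 \<longrightarrow>
               graph_iso F (quotient_edges (induced_edges E Mt) F) VS (induced_edges E VS))"
proof -
  have symE: "sym E" and irrE: "irrefl E" using assms(1) unfolding undirected_def by auto
  interpret u: ug E using symE irrE by unfold_locales
  interpret m: mp E VS by unfold_locales
  have MM: "M = m.M" unfolding M_def m.M_def using u.multiplex_eq .
  have MtMt: "Mt = m.Mt" unfolding Mt_def m.Mt_def MM ..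
  have DD: "induced_edges E Mt = m.D" unfolding m.D_def MtMt ..
  have S: "finite VS" "card VS \<ge> 2"
    and compl: "\<And>u v. u \<in> VS \<Longrightarrow> v \<in> VS \<Longrightarrow> u \<noteq> v \<Longrightarrow> (u,v) \<in> E"
    and dst: "\<And>u v c d C. u \<in> VS \<Longrightarrow> v \<in> VS \<Longrightarrow> c \<in> VS \<Longrightarrow> d \<in> VS \<Longrightarrow> u \<noteq> v \<Longrightarrow> c \<noteq> d \<Longrightarrow>
        {u,v} \<noteq> {c,d} \<Longrightarrow> C \<in> color_classes E \<Longrightarrow> (u,v) \<in> C \<Longrightarrow> (c,d) \<notin> C"
    using assms(2) unfolding simplex_def by blast+
  show ?thesis
  proof (cases "card VS = 2")
    case True
    then obtain a b where ab: "VS = {a,b}" "a \<noteq> b" by (meson card_2_iff)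
    have abE: "(a,b) \<in> E" using compl ab by auto
    interpret r: r1 E VS a b using ab abE by unfold_locales
    have rk: "simplex_rank VS = 1" "\<not> (2 \<le> simplex_rank VS)" unfolding simplex_rank_def using True by simp_all
    obtain F where F: "partition_on m.Mt F" "F \<noteq> {m.Mt}" "\<forall>X\<in>F. max_strong_partitive m.Mt m.D X"
      "graph_iso F (quotient_edges m.D F) VS (induced_edges E VS) \<or>
      (indecomposable F (quotient_edges m.D F) \<and>
       (\<exists>V'. V' \<subseteq> m.Mt \<and> induced_edges E V' \<subseteq> m.M \<and>
            graph_iso F (quotient_edges m.D F) V' (induced_edges E V')))"
      using r.r1_main by blast
    show ?thesis unfolding MtMt MM
      apply (rule exI[of _ F])
      using F[unfolded m.D_def] rk by blast
  next
    case False
    then have c3: "card VS \<ge> 3" using S by simp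
    have dist: "{u,v} = {u',v'}"
      if h: "u \<in> VS" "v \<in> VS" "u' \<in> VS" "v' \<in> VS" "u \<noteq> v" "u' \<noteq> v'" "((u,v),(u',v')) \<in> u.G\<^sup>+"
      for u v u' v'
    proof (rule ccontr)
      assume n: "{u,v} \<noteq> {u',v'}"
      obtain C where C: "C \<in> color_classes E" "(u,v) \<in> C" "(u',v') \<in> C"
        using u.samecol_cc h(7) by blast
      show False using dst[OF h(1-6) n C(1,2)] C(3) by blast
    qed
    interpret r: r2 E VS using S(1) c3 compl dist by unfold_locales blast+
    have rk: "simplex_rank VS \<ge> 2" "simplex_rank VS \<noteq> 1" unfolding simplex_rank_def using c3 by auto
    obtain F where F: "partition_on m.Mt F" "F \<noteq> {m.Mt}" "\<forall>X\<in>F. max_strong_partitive m.Mt m.D X"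
      "graph_iso F (quotient_edges m.D F) VS (induced_edges E VS)"
      using r.r2_main by blast
    show ?thesis unfolding MtMt MM
      apply (rule exI[of _ F])
      using F[unfolded m.D_def] rk by blast
  qed
qed

end
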